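(* Let $C$ be a weakly compact convex subset of a Banach space $X$ and let $T:C\to C$ be an orbitally Kannan mapping which diminishes the radius of orbits. Then the set $\{r_x(O_T(x)) : x\in C\}$ has a smallest element.
   Context: For $x\in X$ and $A\subseteq X$, $r_x(A)=\sup\{\|x-y\|:y\in A\}$; $O_T(x)=\{x,Tx,T^2x,\dots\}$. $T$ is orbitally Kannan if $\|Tx-Ty\|\le\frac12\big(r_x(O_T(x))+r_y(O_T(y))\big)$ for all $x,y\in C$. $T$ diminishes the radius of orbits if $r_{Tx}(O_T(Tx))\le r_x(O_T(x))$ for all $x\in C$. *)

theory Defs
  imports "HOL-Analysis.Analysis"
begin

definition weak_topology :: "'a::real_normed_vector topology" where
  "weak_topology = topology_generated_by
     {f -` U | f U. bounded_linear (f :: 'a \<Rightarrow> real) \<and> open U}"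

definition weakly_compact :: "'a::real_normed_vector set \<Rightarrow> bool" where
  "weakly_compact C \<longleftrightarrow> compactin weak_topology C"

definition rad :: "'a::real_normed_vector \<Rightarrow> 'a set \<Rightarrow> real" where
  "rad x A = Sup {norm (x - y) | y. y \<in> A}"

definition orbit :: "('a \<Rightarrow> 'a) \<Rightarrow> 'a \<Rightarrow> 'a set" where
  "orbit T x = range (\<lambda>n. (T ^^ n) x)"

definition orbitally_kannan :: "('a::real_normed_vector \<Rightarrow> 'a) \<Rightarrow> 'a set \<Rightarrow> bool" where
  "orbitally_kannan T C \<longleftrightarrow> (\<forall>x\<in>C. \<forall>y\<in>C.
     norm (T x - T y) \<le> (rad x (orbit T x) + rad y (orbit T y)) / 2)"

definition diminishes_radius_of_orbits :: "('a::real_normed_vector \<Rightarrow> 'a) \<Rightarrow> 'a set \<Rightarrow> bool" where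
  "diminishes_radius_of_orbits T C \<longleftrightarrow>
     (\<forall>x\<in>C. rad (T x) (orbit T (T x)) \<le> rad x (orbit T x))"

end

theory Submission
  imports Defs
begin


definition good_graph :: "('a::real_normed_vector \<times> real) set \<Rightarrow> bool" where
  "good_graph G \<longleftrightarrow> (\<forall>x a b. (x,a)\<in>G \<longrightarrow> (x,b)\<in>G \<longrightarrow> a = b) \<and> (0,0)\<in>G \<and>
     (\<forall>x a y b. (x,a)\<in>G \<longrightarrow> (y,b)\<in>G \<longrightarrow> (x+y,a+b)\<in>G) \<and>
     (\<forall>x a c. (x,a)\<in>G \<longrightarrow> (c *\<^sub>R x, c*a)\<in>G) \<and> (\<forall>x a. (x,a)\<in>G \<longrightarrow> a \<le> norm x)"

lemma good_graph_chain_union: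
  assumes "C \<in> chains {G. good_graph G \<and> (w, norm w) \<in> G}" "C \<noteq> {}"
  shows "good_graph (\<Union>C) \<and> (w, norm w) \<in> \<Union>C"
proof -
  have gC: "\<And>G. G \<in> C \<Longrightarrow> good_graph G \<and> (w, norm w) \<in> G"
    using assms(1) unfolding chains_def by blast
  have two: "\<exists>K\<in>C. G \<subseteq> K \<and> H \<subseteq> K" if "G \<in> C" "H \<in> C" for G H
  proof -
    have "G \<subseteq> H \<or> H \<subseteq> G" using chainsD[OF assms(1) that] .
    then show ?thesis
    proof
      assume "G \<subseteq> H" then show ?thesis using that(2) by blast
    next
      assume "H \<subseteq> G" then show ?thesis using that(1) by blast
    qed
  qed
  obtain G0 where "G0 \<in> C" using assms(2) by blast
  show ?thesis
    unfolding good_graph_def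
  proof (intro conjI allI impI)
    fix x a b assume "(x,a) \<in> \<Union>C" "(x,b) \<in> \<Union>C"
    then obtain G H where "G\<in>C" "H\<in>C" "(x,a)\<in>G" "(x,b)\<in>H" by blast
    then obtain K where "K\<in>C" "(x,a)\<in>K" "(x,b)\<in>K" using two by blast
    moreover have "good_graph K" using gC \<open>K\<in>C\<close> by blast
    ultimately show "a = b" unfolding good_graph_def by blast
  next
    have "(0,0) \<in> G0" using gC[OF \<open>G0\<in>C\<close>] unfolding good_graph_def by blast
    then show "(0,0) \<in> \<Union>C" using \<open>G0\<in>C\<close> by blast
  next
    fix x a y b assume "(x,a) \<in> \<Union>C" "(y,b) \<in> \<Union>C"
    then obtain G H where "G\<in>C" "H\<in>C" "(x,a)\<in>G" "(y,b)\<in>H" by blast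
    then obtain K where "K\<in>C" "(x,a)\<in>K" "(y,b)\<in>K" using two by blast
    moreover have "good_graph K" using gC \<open>K\<in>C\<close> by blast
    ultimately have "(x+y,a+b) \<in> K" unfolding good_graph_def by blast
    then show "(x+y,a+b) \<in> \<Union>C" using \<open>K\<in>C\<close> by blast
  next
    fix x a c assume "(x,a) \<in> \<Union>C"
    then obtain K where "K\<in>C" "(x,a)\<in>K" by blast
    moreover have "good_graph K" using gC \<open>K\<in>C\<close> by blast
    ultimately have "(c *\<^sub>R x, c*a) \<in> K" unfolding good_graph_def by blast
    then show "(c *\<^sub>R x, c*a) \<in> \<Union>C" using \<open>K\<in>C\<close> by blast
  next
    fix x a assume "(x,a) \<in> \<Union>C"
    then obtain K where "K\<in>C" "(x,a)\<in>K" by blast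
    moreover have "good_graph K" using gC \<open>K\<in>C\<close> by blast
    ultimately show "a \<le> norm x" unfolding good_graph_def by blast
  next
    show "(w, norm w) \<in> \<Union>C" using gC \<open>G0\<in>C\<close> by blast
  qed
qed

lemma good_graph_init:
  fixes w :: "'a::real_normed_vector"
  shows "good_graph (range (\<lambda>t. (t *\<^sub>R w, t * norm w)))"
  unfolding good_graph_def
proof (intro conjI allI impI)
  fix x a b assume "(x,a) \<in> range (\<lambda>t. (t *\<^sub>R w, t * norm w))" "(x,b) \<in> range (\<lambda>t. (t *\<^sub>R w, t * norm w))"
  then obtain s t where "(x,a) = (s *\<^sub>R w, s * norm w)" "(x,b) = (t *\<^sub>R w, t * norm w)" by blast
  then have st: "x = s *\<^sub>R w" "a = s * norm w" "x = t *\<^sub>R w" "b = t * norm w" by simp_all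
  show "a = b"
  proof (cases "w = 0")
    case True then show ?thesis using st by simp
  next
    case False
    then have "s = t" using st by simp
    then show ?thesis using st by simp
  qed
next
  show "(0, 0) \<in> range (\<lambda>t. (t *\<^sub>R w, t * norm w))" by (rule image_eqI[where x=0]) auto
next
  fix x a y b assume "(x,a) \<in> range (\<lambda>t. (t *\<^sub>R w, t * norm w))" "(y,b) \<in> range (\<lambda>t. (t *\<^sub>R w, t * norm w))"
  then obtain s t where st: "x = s *\<^sub>R w" "a = s * norm w" "y = t *\<^sub>R w" "b = t * norm w" by auto
  show "(x+y, a+b) \<in> range (\<lambda>t. (t *\<^sub>R w, t * norm w))"
    by (rule image_eqI[where x="s+t"]) (simp_all add: st scaleR_add_left distrib_right)
next
  fix x a c assume "(x,a) \<in> range (\<lambda>t. (t *\<^sub>R w, t * norm w))"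
  then obtain s where st: "x = s *\<^sub>R w" "a = s * norm w" by auto
  show "(c *\<^sub>R x, c*a) \<in> range (\<lambda>t. (t *\<^sub>R w, t * norm w))"
    by (rule image_eqI[where x="c * s"]) (simp_all add: st)
next
  fix x a assume "(x,a) \<in> range (\<lambda>t. (t *\<^sub>R w, t * norm w))"
  then obtain s where st: "x = s *\<^sub>R w" "a = s * norm w" by auto
  show "a \<le> norm x" using st by (simp add: mult_right_mono)
qed

lemma good_graph_extend:
  fixes M :: "('a::real_normed_vector \<times> real) set"
  assumes g: "good_graph M" and x0: "\<forall>a. (x0,a) \<notin> M"
  shows "\<exists>M'. good_graph M' \<and> M \<subseteq> M' \<and> M' \<noteq> M"
proof -
  have fnc: "\<And>x a b. (x,a)\<in>M \<Longrightarrow> (x,b)\<in>M \<Longrightarrow> a = b"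
   and zero: "(0,0)\<in>M"
   and add: "\<And>x a y b. (x,a)\<in>M \<Longrightarrow> (y,b)\<in>M \<Longrightarrow> (x+y,a+b)\<in>M"
   and scl: "\<And>x a c. (x,a)\<in>M \<Longrightarrow> (c *\<^sub>R x, c*a)\<in>M"
   and bnd: "\<And>x a. (x,a)\<in>M \<Longrightarrow> a \<le> norm x"
    using g unfolding good_graph_def by blast+
  have key: "a - norm (s - x0) \<le> norm (t + x0) - b" if "(s,a)\<in>M" "(t,b)\<in>M" for s a t b
  proof -
    have "a + b \<le> norm (s + t)" using bnd[OF add[OF that]] .
    also have "s + t = (s - x0) + (t + x0)" by simp
    also have "norm \<dots> \<le> norm (s - x0) + norm (t + x0)" by (rule norm_triangle_ineq)
    finally show ?thesis by simp
  qed
  define S where "S = {a - norm (s - x0) | s a. (s,a)\<in>M}"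
  define c where "c = Sup S"
  have Sne: "S \<noteq> {}" using zero unfolding S_def by blast
  have Sbdd: "bdd_above S"
  proof (rule bdd_aboveI[where M="norm (0 + x0) - 0"])
    fix y assume "y \<in> S"
    then obtain s a where sa: "(s,a)\<in>M" "y = a - norm (s - x0)" unfolding S_def by blast
    show "y \<le> norm (0 + x0) - 0" using key[OF sa(1) zero] sa(2) by simp
  qed
  have c1: "a - norm (s - x0) \<le> c" if "(s,a)\<in>M" for s a
    unfolding c_def by (rule cSup_upper[OF _ Sbdd]) (use that S_def in blast)
  have c2: "c \<le> norm (t + x0) - b" if "(t,b)\<in>M" for t b
    unfolding c_def
  proof (rule cSup_least[OF Sne])
    fix y assume "y \<in> S"
    then obtain s a where sa: "(s,a)\<in>M" "y = a - norm (s - x0)" unfolding S_def by blast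
    show "y \<le> norm (t + x0) - b" using key[OF sa(1) that] sa(2) by simp
  qed
  define M' where "M' = {(s + t *\<^sub>R x0, a + t*c) | s a t. (s,a)\<in>M}"
  have memM': "(s + t *\<^sub>R x0, a + t*c) \<in> M'" if "(s,a)\<in>M" for s a t
    unfolding M'_def using that by blast
  have "good_graph M'"
    unfolding good_graph_def
  proof (intro conjI allI impI)
    fix x a b assume "(x,a)\<in>M'" "(x,b)\<in>M'"
    then obtain s a1 t s' a1' t' where h0: "(s,a1)\<in>M" "(s',a1')\<in>M" "(x,a) = (s + t *\<^sub>R x0, a1 + t*c)"
      "(x,b) = (s' + t' *\<^sub>R x0, a1' + t'*c)" unfolding M'_def by blast
    then have h: "(s,a1)\<in>M" "(s',a1')\<in>M" "x = s + t *\<^sub>R x0" "a = a1 + t*c"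
      "x = s' + t' *\<^sub>R x0" "b = a1' + t'*c" by simp_all
    have "t = t'"
    proof (rule ccontr)
      assume "t \<noteq> t'"
      have "(s' + (-1) *\<^sub>R s, a1' + (-1)*a1) \<in> M" using add[OF h(2) scl[OF h(1)]] .
      then have "((1/(t - t')) *\<^sub>R (s' + (-1) *\<^sub>R s), (1/(t-t')) * (a1' + (-1)*a1)) \<in> M" by (rule scl)
      moreover have "(1/(t - t')) *\<^sub>R (s' + (-1) *\<^sub>R s) = x0"
      proof -
        have "s' - s = (t - t') *\<^sub>R x0" using h(3) h(5) by (simp add: algebra_simps)
        then show ?thesis using \<open>t \<noteq> t'\<close> by simp
      qed
      ultimately show False using x0 by auto
    qed
    then have "s = s'" using h by simp
    then have "a1 = a1'" using fnc h by blast
    then show "a = b" using h \<open>t = t'\<close> by simp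
  next
    show "(0,0) \<in> M'" using memM'[OF zero, of 0] by simp
  next
    fix x a y b assume "(x,a)\<in>M'" "(y,b)\<in>M'"
    then obtain s a1 t s' a1' t' where h0: "(s,a1)\<in>M" "(s',a1')\<in>M" "(x,a) = (s + t *\<^sub>R x0, a1 + t*c)"
      "(y,b) = (s' + t' *\<^sub>R x0, a1' + t'*c)" unfolding M'_def by blast
    then have h: "(s,a1)\<in>M" "(s',a1')\<in>M" "x = s + t *\<^sub>R x0" "a = a1 + t*c"
      "y = s' + t' *\<^sub>R x0" "b = a1' + t'*c" by simp_all
    have "(x + y, a + b) = ((s + s') + (t + t') *\<^sub>R x0, (a1 + a1') + (t+t')*c)"
      using h by (simp add: algebra_simps)
    then show "(x+y, a+b) \<in> M'" using memM'[OF add[OF h(1) h(2)], of "t+t'"] by simp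
  next
    fix x a r assume "(x,a)\<in>M'"
    then obtain s a1 t where h0: "(s,a1)\<in>M" "(x,a) = (s + t *\<^sub>R x0, a1 + t*c)" unfolding M'_def by blast
    then have h: "(s,a1)\<in>M" "x = s + t *\<^sub>R x0" "a = a1 + t*c" by simp_all
    have "(r *\<^sub>R x, r * a) = (r *\<^sub>R s + (r*t) *\<^sub>R x0, r*a1 + (r*t)*c)"
      using h by (simp add: algebra_simps)
    then show "(r *\<^sub>R x, r*a) \<in> M'" using memM'[OF scl[OF h(1), of r], of "r*t"] by simp
  next
    fix x a assume "(x,a)\<in>M'"
    then obtain s a1 t where h0: "(s,a1)\<in>M" "(x,a) = (s + t *\<^sub>R x0, a1 + t*c)" unfolding M'_def by blast
    then have h: "(s,a1)\<in>M" "x = s + t *\<^sub>R x0" "a = a1 + t*c" by simp_all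
    show "a \<le> norm x"
    proof (cases "t = 0")
      case True then show ?thesis using h bnd by simp
    next
      case False
      show ?thesis
      proof (cases "t > 0")
        case True
        have m: "((1/t) *\<^sub>R s, (1/t)*a1) \<in> M" using scl h by blast
        have "c \<le> norm ((1/t) *\<^sub>R s + x0) - (1/t)*a1" using c2[OF m] .
        then have "t * c \<le> t * (norm ((1/t) *\<^sub>R s + x0) - (1/t)*a1)"
          using True by (intro mult_left_mono) auto
        also have "t * (norm ((1/t) *\<^sub>R s + x0) - (1/t)*a1) = t * norm ((1/t) *\<^sub>R s + x0) - a1"
          using True by (simp add: right_diff_distrib)
        also have "t * norm ((1/t) *\<^sub>R s + x0) = norm (s + t *\<^sub>R x0)"
        proof -
          have "t * norm ((1/t) *\<^sub>R s + x0) = norm (t *\<^sub>R ((1/t) *\<^sub>R s + x0))" using True by simp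
          also have "t *\<^sub>R ((1/t) *\<^sub>R s + x0) = s + t *\<^sub>R x0" using True by (simp add: scaleR_add_right)
          finally show ?thesis .
        qed
        finally show ?thesis using h by simp
      next
        case False
        with \<open>t \<noteq> 0\<close> have u: "-t > 0" by simp
        have m: "((1/(-t)) *\<^sub>R s, (1/(-t))*a1) \<in> M" using scl h by blast
        have "(1/(-t))*a1 - norm ((1/(-t)) *\<^sub>R s - x0) \<le> c" using c1[OF m] .
        then have "(-t) * ((1/(-t))*a1 - norm ((1/(-t)) *\<^sub>R s - x0)) \<le> (-t) * c"
          using u by (simp add: mult_left_mono)
        moreover have "(-t) * ((1/(-t))*a1 - norm ((1/(-t)) *\<^sub>R s - x0)) = a1 - norm (s + t *\<^sub>R x0)"
        proof -
          have "(-t) * norm ((1/(-t)) *\<^sub>R s - x0) = norm ((-t) *\<^sub>R ((1/(-t)) *\<^sub>R s - x0))" using u by simp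
          also have "(-t) *\<^sub>R ((1/(-t)) *\<^sub>R s - x0) = s + t *\<^sub>R x0" using u by (simp add: scaleR_diff_right)
          finally have "(-t) * norm ((1/(-t)) *\<^sub>R s - x0) = norm (s + t *\<^sub>R x0)" .
          then show ?thesis using u by (simp add: right_diff_distrib)
        qed
        ultimately show ?thesis using h by simp
      qed
    qed
  qed
  moreover have "M \<subseteq> M'"
  proof
    fix p assume "p \<in> M"
    then obtain s a where "p = (s,a)" "(s,a)\<in>M" by (cases p) auto
    then show "p \<in> M'" using memM'[of s a 0] by simp
  qed
  moreover have "(x0, c) \<in> M'" using memM'[OF zero, of 1] by simp
  then have "M' \<noteq> M" using x0 by blast
  ultimately show ?thesis by blast
qed

lemma hahn_banach_norm:
  fixes w :: "'a::real_normed_vector"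
  shows "\<exists>f. bounded_linear f \<and> f w = norm w \<and> (\<forall>u. f u \<le> norm u)"
proof -
  define A where "A = {G::('a \<times> real) set. good_graph G \<and> (w, norm w) \<in> G}"
  define G0 where "G0 = range (\<lambda>t. (t *\<^sub>R w, t * norm w))"
  have G0A: "G0 \<in> A" unfolding A_def G0_def using good_graph_init[of w]
    by (auto intro!: image_eqI[where x=1])
  have "\<forall>C\<in>chains A. \<exists>U\<in>A. \<forall>X\<in>C. X \<subseteq> U"
  proof
    fix C assume C: "C \<in> chains A"
    show "\<exists>U\<in>A. \<forall>X\<in>C. X \<subseteq> U"
    proof (cases "C = {}")
      case True then show ?thesis using G0A by blast
    next
      case False
      then have "\<Union>C \<in> A" using good_graph_chain_union[of C w] C unfolding A_def by blast
      then show ?thesis by blast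
    qed
  qed
  then obtain M where MA: "M \<in> A" and Mmax: "\<forall>X\<in>A. M \<subseteq> X \<longrightarrow> X = M" by (metis Zorn_Lemma2)
  have gM: "good_graph M" and wM: "(w, norm w) \<in> M" using MA unfolding A_def by auto
  have tot: "\<exists>a. (x,a) \<in> M" for x
  proof (rule ccontr)
    assume "\<nexists>a. (x, a) \<in> M"
    then obtain M' where "good_graph M'" "M \<subseteq> M'" "M' \<noteq> M" using good_graph_extend[OF gM] by blast
    moreover have "M' \<in> A" using \<open>good_graph M'\<close> \<open>M \<subseteq> M'\<close> wM unfolding A_def by blast
    ultimately show False using Mmax by blast
  qed
  have fnc: "\<And>x a b. (x,a)\<in>M \<Longrightarrow> (x,b)\<in>M \<Longrightarrow> a = b"
   and add: "\<And>x a y b. (x,a)\<in>M \<Longrightarrow> (y,b)\<in>M \<Longrightarrow> (x+y,a+b)\<in>M"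
   and scl: "\<And>x a c. (x,a)\<in>M \<Longrightarrow> (c *\<^sub>R x, c*a)\<in>M"
   and bnd: "\<And>x a. (x,a)\<in>M \<Longrightarrow> a \<le> norm x"
    using gM unfolding good_graph_def by blast+
  define f where "f x = (THE a. (x,a) \<in> M)" for x
  have fM: "(x, f x) \<in> M" for x
  proof -
    have "\<exists>!a. (x,a) \<in> M" using tot[of x] fnc by blast
    then show ?thesis unfolding f_def by (rule theI')
  qed
  have fe: "(x,a) \<in> M \<Longrightarrow> f x = a" for x a using fnc fM by blast
  have fadd: "f (x + y) = f x + f y" for x y using fe[OF add[OF fM fM]] .
  have fscl: "f (r *\<^sub>R x) = r * f x" for r x using fe[OF scl[OF fM]] .
  have fle: "f u \<le> norm u" for u using bnd[OF fM] .
  have fabs: "norm (f u) \<le> norm u * 1" for u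
  proof -
    have "- f u = f (-u)" using fscl[of "-1" u] by simp
    then have "- f u \<le> norm u" using fle[of "-u"] by simp
    then show ?thesis using fle[of u] by simp
  qed
  have "bounded_linear f"
    by (rule bounded_linear_intro[OF fadd _ fabs]) (simp add: fscl)
  moreover have "f w = norm w" using fe[OF wM] .
  ultimately show ?thesis using fle by blast
qed

theorem theorem4p3:
  fixes C :: "'a::banach set" and T :: "'a \<Rightarrow> 'a"
  assumes "C \<noteq> {}"
    and "weakly_compact C"
    and "convex C"
    and "\<forall>x\<in>C. T x \<in> C"
    and "orbitally_kannan T C"
    and "diminishes_radius_of_orbits T C"
  shows "\<exists>x\<in>C. \<forall>y\<in>C. rad x (orbit T x) \<le> rad y (orbit T y)"
proof -
  define \<phi> where "\<phi> z = rad z (orbit T z)" for z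
  have inC: "(T^^k) z \<in> C" if "z \<in> C" for z k
    using that by (induction k) (auto simp: assms(4))
  have dim: "\<phi> ((T^^k) z) \<le> \<phi> z" if "z \<in> C" for z k
  proof (induction k)
    case 0 then show ?case by simp
  next
    case (Suc k)
    have "\<phi> ((T^^Suc k) z) = \<phi> (T ((T^^k) z))" by simp
    also have "\<dots> \<le> \<phi> ((T^^k) z)"
      using assms(6) inC[OF that, of k] unfolding diminishes_radius_of_orbits_def \<phi>_def by blast
    finally show ?case using Suc.IH by linarith
  qed
  have kan: "norm (T y - (T^^m) z) \<le> (\<phi> y + \<phi> z) / 2" if kh: "y \<in> C" "z \<in> C" "m \<ge> 1" for y z m
  proof -
    obtain k where m: "m = Suc k" using kh(3) by (cases m) auto
    have "(T^^m) z = T ((T^^k) z)" using m by simp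
    then have "norm (T y - (T^^m) z) \<le> (\<phi> y + \<phi> ((T^^k) z)) / 2"
      using assms(5) kh(1) inC[OF kh(2), of k] unfolding orbitally_kannan_def \<phi>_def by auto
    also have "\<dots> \<le> (\<phi> y + \<phi> z) / 2" using dim[OF kh(2), of k] by simp
    finally show ?thesis .
  qed
  have phi_eq: "\<phi> z = Sup (range (\<lambda>n. norm (z - (T^^n) z)))" for z
  proof -
    have "{norm (z - y) | y. y \<in> orbit T z} = range (\<lambda>n. norm (z - (T^^n) z))"
      unfolding orbit_def by auto
    then show ?thesis unfolding \<phi>_def rad_def by simp
  qed
  have bdd: "bdd_above (range (\<lambda>n. norm (z - (T^^n) z)))" if "z \<in> C" for z
  proof (rule bdd_aboveI[where M="norm (z - T z) + \<phi> z"])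
    have p0: "0 \<le> \<phi> z" using kan[OF that that, of 1] by simp
    fix x assume "x \<in> range (\<lambda>n. norm (z - (T^^n) z))"
    then obtain n where x: "x = norm (z - (T^^n) z)" by blast
    show "x \<le> norm (z - T z) + \<phi> z"
    proof (cases n)
      case 0 then show ?thesis using x p0 by simp
    next
      case (Suc k)
      have "norm (z - (T^^n) z) \<le> norm (z - T z) + norm (T z - (T^^n) z)"
        using norm_triangle_ineq[of "z - T z" "T z - (T^^n) z"] by simp
      also have "norm (T z - (T^^n) z) \<le> \<phi> z" using kan[OF that that, of n] Suc by simp
      finally show ?thesis using x by simp
    qed
  qed
  have le_phi: "norm (z - (T^^n) z) \<le> \<phi> z" if "z \<in> C" for z n
    unfolding phi_eq by (rule cSup_upper[OF _ bdd[OF that]]) simp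
  have phi_le: "\<phi> z \<le> K" if "\<And>n. norm (z - (T^^n) z) \<le> K" for z K
    unfolding phi_eq by (rule cSup_least) (use that in auto)
  have phi_nn: "0 \<le> \<phi> z" if "z \<in> C" for z using le_phi[OF that, of 0] by simp
  define r where "r = Inf (\<phi> ` C)"
  have bddb: "bdd_below (\<phi> ` C)" using phi_nn by (auto intro: bdd_belowI[where m=0])
  have r_le: "r \<le> \<phi> y" if "y \<in> C" for y
    unfolding r_def using bddb that by (auto intro: cInf_lower)
  have r_nn: "0 \<le> r"
    unfolding r_def using assms(1) phi_nn by (auto intro: cInf_greatest)
  have r_approx: "\<exists>y\<in>C. \<phi> y < r + e" if "e > 0" for e
  proof -
    have "Inf (\<phi> ` C) < r + e" using that r_def by simp
    then obtain t where "t \<in> \<phi> ` C" "t < r + e" using cInf_lessD[of "\<phi> ` C"] assms(1) by blast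
    then show ?thesis by blast
  qed
  show ?thesis
  proof (rule ccontr)
    assume H: "\<not> ?thesis"
    have gt: "r < \<phi> z" if zC0: "z \<in> C" for z
    proof -
      have "\<not> (\<forall>y\<in>C. \<phi> z \<le> \<phi> y)" using H zC0 unfolding \<phi>_def by blast
      then obtain y where "y \<in> C" "\<phi> y < \<phi> z" by (auto simp: not_le)
      then show ?thesis using r_le[of y] by simp
    qed
    define \<U> where "\<U> = {U. openin weak_topology U \<and> (\<exists>\<delta>>0. \<forall>y\<in>C. \<phi> y < r + \<delta> \<longrightarrow> T y \<notin> U)}"
    have cover: "C \<subseteq> \<Union>\<U>"
    proof
      fix z assume zC: "z \<in> C"
      have "\<exists>m. norm (z - (T^^m) z) > (r + \<phi> z) / 2"
      proof (rule ccontr)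
        assume "\<not> ?thesis"
        then have "\<phi> z \<le> (r + \<phi> z) / 2" by (intro phi_le) (simp add: not_less)
        then show False using gt[OF zC] by simp
      qed
      then obtain m where m: "norm (z - (T^^m) z) > (r + \<phi> z) / 2" by blast
      define v where "v = (T^^m) z"
      define d where "d = norm (z - v)"
      have m1: "m \<ge> 1"
      proof (rule ccontr)
        assume "\<not> m \<ge> 1" then have "m = 0" by simp
        then show False using m r_nn phi_nn[OF zC] by simp
      qed
      obtain f where bl: "bounded_linear f" and fw: "f (z - v) = norm (z - v)" and fle: "\<forall>u. f u \<le> norm u"
        using hahn_banach_norm[of "z - v"] by blast
      define e where "e = (d + (r + \<phi> z) / 2) / 2"
      have de1: "(r + \<phi> z) / 2 < e" using m unfolding e_def d_def v_def by argo
      have de2: "e < d" using m unfolding e_def d_def v_def by argo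
      note de = de1 de2
      define U where "U = f -` {e + f v <..}"
      have "openin weak_topology U"
        unfolding weak_topology_def U_def
      proof (rule topology_generated_by_Basis)
        have "open {e + f v <..}" by (rule open_greaterThan)
        then show "f -` {e + f v <..} \<in> {f -` U | f U. bounded_linear (f :: 'a \<Rightarrow> real) \<and> open U}"
          using bl by blast
      qed
      moreover have "z \<in> U"
      proof -
        have "f z = f (z - v) + f v" using linear_diff[OF bounded_linear.linear[OF bl], of z v] by simp
        then show ?thesis unfolding U_def using fw de unfolding d_def by simp
      qed
      moreover have "\<forall>y\<in>C. \<phi> y < r + (2 * e - \<phi> z - r) \<longrightarrow> T y \<notin> U"
      proof (intro ballI impI)
        fix y assume yC: "y \<in> C" and hy: "\<phi> y < r + (2 * e - \<phi> z - r)"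
        have "f (T y) - f v = f (T y - v)" using linear_diff[OF bounded_linear.linear[OF bl]] by simp
        also have "\<dots> \<le> norm (T y - v)" using fle by blast
        also have "\<dots> \<le> (\<phi> y + \<phi> z) / 2" unfolding v_def by (rule kan[OF yC zC m1])
        also have "\<dots> < e" using hy by simp
        finally show "T y \<notin> U" unfolding U_def by simp
      qed
      moreover have "2 * e - \<phi> z - r > 0" using de by simp
      ultimately have "U \<in> \<U>" unfolding \<U>_def by (intro CollectI conjI exI[of _ "2 * e - \<phi> z - r"]) auto
      then show "z \<in> \<Union>\<U>" using \<open>z \<in> U\<close> by blast
    qed
    have "compactin weak_topology C" using assms(2) unfolding weakly_compact_def .
    moreover have "\<forall>U\<in>\<U>. openin weak_topology U" unfolding \<U>_def by blast
    ultimately obtain F where F: "finite F" "F \<subseteq> \<U>" "C \<subseteq> \<Union>F"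
      using cover unfolding compactin_def by meson
    have "\<exists>\<delta>>0. \<forall>U\<in>F. \<forall>y\<in>C. \<phi> y < r + \<delta> \<longrightarrow> T y \<notin> U"
      using F(1,2)
    proof (induction rule: finite_subset_induct)
      case empty then show ?case by (intro exI[of _ 1]) simp
    next
      case (insert U F)
      obtain \<delta>1 where d1: "\<delta>1 > 0" "\<forall>y\<in>C. \<phi> y < r + \<delta>1 \<longrightarrow> T y \<notin> U"
        using insert.hyps(2) unfolding \<U>_def by blast
      obtain \<delta>2 where d2: "\<delta>2 > 0" "\<forall>V\<in>F. \<forall>y\<in>C. \<phi> y < r + \<delta>2 \<longrightarrow> T y \<notin> V"
        using insert.IH by blast
      show ?case
        by (rule exI[of _ "min \<delta>1 \<delta>2"]) (use d1 d2 in auto)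
    qed
    then obtain \<delta> where "\<delta> > 0" and dl: "\<forall>U\<in>F. \<forall>y\<in>C. \<phi> y < r + \<delta> \<longrightarrow> T y \<notin> U" by blast
    obtain y where yC: "y \<in> C" and "\<phi> y < r + \<delta>" using r_approx[OF \<open>\<delta> > 0\<close>] by blast
    have "T y \<in> C" using assms(4) yC by blast
    then obtain U where "U \<in> F" "T y \<in> U" using F(3) by blast
    then show False using dl yC \<open>\<phi> y < r + \<delta>\<close> by blast
  qed
qed

end
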